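(* Let $\Gamma$ be a game over an interval $I=[b,e]\subseteq[0,1]$ (in the setting described in the context), and let $l$ be a location with $l\notin L^{\mathrm{Goal}}$, $\mathrm{urg}(l)=0$, and at least one outgoing edge; assume that for every $l'$ with $(l,l')\in E$, the function $x\mapsto\mathrm{OptCost}(l',x)$ is a real-valued cost function on $I$. (i) If $l\in L^{\mathrm{Min}}$ and $h(x)=\min\{\mathrm{OptCost}(l',x):(l,l')\in E\}$, then for all $x\in I$, $\mathrm{OptCost}(l,x)=\mathrm{minC}(h,\pi(l))(x)$. (ii) If $l\in L^{\mathrm{Max}}$ and $h(x)=\max\{\mathrm{OptCost}(l',x):(l,l')\in E\}$, then for all $x\in I$, $\mathrm{OptCost}(l,x)=\mathrm{maxC}(h,\pi(l))(x)$.
   Context: Setting: a game $\Gamma$ over an interval $I=[b,e]\subseteq[0,1]$ consists of a finite set of locations $L=L^{\mathrm{Min}}\cup L^{\mathrm{Max}}$ (disjoint), goal locations $L^{\mathrm{Goal}}\subseteq L$ each assigned a cost function on $I$ (a continuous, non-increasing, piecewise affine function with finitely many pieces), an edge set $E\subseteq L\times L$ (all guards true, no resets, discrete transitions have price $0$), an urgency map $\mathrm{urg}:L\to\{0,1\}$ and price rates $\pi:L\to\mathbb{N}$. States are $L\times I$; discrete transitions $(l,x)\to(l',x)$ for $(l,l')\in E$ with price $0$; continuous transitions $(l,x)\xrightarrow{t}(l,x+t)$ for $t>0$, $\mathrm{urg}(l)=0$, $x+t\le e$, with price $\pi(l)t$. Runs are finite or infinite sequences of consecutive transitions, not containing infinitely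 many consecutive continuous transitions. Strategies of the minimizer (maximizer) map finite runs ending in states with location in $L^{\mathrm{Min}}$ ($L^{\mathrm{Max}}$) to an available transition; $\mathrm{Run}(s,\mu,\chi)$ is the unique resulting run. The cost of a run that first visits a goal location $l$ at state $(l,x)$ after $n$ transitions is (goal cost function of $l$)$(x)$ plus the sum of the prices of the first $n$ transitions, and $\infty$ if no goal location is visited. $\mathrm{OptCost}(s)=\inf_\mu\sup_\chi\mathrm{Cost}(\mathrm{Run}(s,\mu,\chi))$, assumed finite from every state. For $f:[b,e]\to\mathbb{R}$ and constant $c\ge0$: $\mathrm{minC}(f,c)(x)=\min_{0\le t\le e-x}(ct+f(x+t))$ and $\mathrm{maxC}(f,c)(x)=\max_{0\le t\le e-x}(ct+f(x+t))$. *)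

theory Defs
  imports Complex_Main "HOL-Library.Extended_Real"
begin

definition cost_function :: "real \<Rightarrow> real \<Rightarrow> (real \<Rightarrow> real) \<Rightarrow> bool" where
  "cost_function b e f \<longleftrightarrow>
     continuous_on {b..e} f \<and>
     (\<forall>x y. b \<le> x \<and> x \<le> y \<and> y \<le> e \<longrightarrow> f y \<le> f x) \<and>
     (\<exists>(n::nat) (a::nat \<Rightarrow> real). a 0 = b \<and> a n = e \<and> (\<forall>i<n. a i \<le> a (Suc i)) \<and>
        (\<forall>i<n. \<exists>\<alpha> \<beta>. \<forall>x\<in>{a i..a (Suc i)}. f x = \<alpha> * x + \<beta>))"

definition minC :: "real \<Rightarrow> (real \<Rightarrow> real) \<Rightarrow> real \<Rightarrow> real \<Rightarrow> real" where
  "minC e f c x = Inf ((\<lambda>t. c * t + f (x + t)) ` {0..e - x})"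

definition maxC :: "real \<Rightarrow> (real \<Rightarrow> real) \<Rightarrow> real \<Rightarrow> real \<Rightarrow> real" where
  "maxC e f c x = Sup ((\<lambda>t. c * t + f (x + t)) ` {0..e - x})"

text \<open>A game over the interval [lb, ub].  Urgency is a boolean (True = urgency 1).\<close>
record 'l game =
  Locs :: "'l set"
  LMin :: "'l set"
  LMax :: "'l set"
  Goal :: "'l set"
  gcost :: "'l \<Rightarrow> real \<Rightarrow> real"
  Edges :: "('l \<times> 'l) set"
  urgent :: "'l \<Rightarrow> bool"
  rate :: "'l \<Rightarrow> nat"
  lb :: real
  ub :: real

definition wf_game :: "'l game \<Rightarrow> bool" where
  "wf_game G \<longleftrightarrow> finite (Locs G) \<and> LMin G \<inter> LMax G = {} \<and> LMin G \<union> LMax G = Locs G \<and>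
     Goal G \<subseteq> Locs G \<and> Edges G \<subseteq> Locs G \<times> Locs G \<and>
     0 \<le> lb G \<and> lb G \<le> ub G \<and> ub G \<le> 1 \<and>
     (\<forall>l\<in>Goal G. cost_function (lb G) (ub G) (gcost G l))"

definition states :: "'l game \<Rightarrow> ('l \<times> real) set" where
  "states G = Locs G \<times> {lb G..ub G}"

datatype 'l trans = Disc 'l | Delay real

fun avail :: "'l game \<Rightarrow> 'l \<times> real \<Rightarrow> 'l trans \<Rightarrow> bool" where
  "avail G (l, x) (Disc l') = ((l, l') \<in> Edges G)"
| "avail G (l, x) (Delay t) = (0 < t \<and> \<not> urgent G l \<and> x + t \<le> ub G)"

fun tgt :: "'l \<times> real \<Rightarrow> 'l trans \<Rightarrow> 'l \<times> real" where
  "tgt (l, x) (Disc l') = (l', x)"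
| "tgt (l, x) (Delay t) = (l, x + t)"

fun price :: "'l game \<Rightarrow> 'l \<times> real \<Rightarrow> 'l trans \<Rightarrow> real" where
  "price G (l, x) (Disc l') = 0"
| "price G (l, x) (Delay t) = real (rate G l) * t"

fun last_st :: "'l \<times> real \<Rightarrow> 'l trans list \<Rightarrow> 'l \<times> real" where
  "last_st s [] = s"
| "last_st s (\<tau> # h) = last_st (tgt s \<tau>) h"

fun valid_run :: "'l game \<Rightarrow> 'l \<times> real \<Rightarrow> 'l trans list \<Rightarrow> bool" where
  "valid_run G s [] = True"
| "valid_run G s (\<tau> # h) = (avail G s \<tau> \<and> valid_run G (tgt s \<tau>) h)"

fun run_price :: "'l game \<Rightarrow> 'l \<times> real \<Rightarrow> 'l trans list \<Rightarrow> real" where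
  "run_price G s [] = 0"
| "run_price G s (\<tau> # h) = price G s \<tau> + run_price G (tgt s \<tau>) h"

definition has_move :: "'l game \<Rightarrow> 'l \<times> real \<Rightarrow> bool" where
  "has_move G s \<longleftrightarrow> (\<exists>\<tau>. avail G s \<tau>)"

type_synonym 'l strategy = "'l \<times> real \<Rightarrow> 'l trans list \<Rightarrow> 'l trans"

fun ext :: "'l strategy \<Rightarrow> 'l \<times> real \<Rightarrow> 'l trans list \<Rightarrow> nat \<Rightarrow> 'l trans list" where
  "ext \<sigma> s h 0 = h"
| "ext \<sigma> s h (Suc k) = ext \<sigma> s h k @ [\<sigma> s (ext \<sigma> s h k)]"

definition is_delay :: "'l trans \<Rightarrow> bool" where
  "is_delay \<tau> \<longleftrightarrow> (\<exists>t. \<tau> = Delay t)"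

text \<open>A strategy of the player owning locations P: on every finite run ending in a
  location of P from which a transition is available, it picks an available transition;
  and it never produces infinitely many consecutive continuous transitions (so the
  resulting sequence is always a run).\<close>
definition is_strategy :: "'l game \<Rightarrow> 'l set \<Rightarrow> 'l strategy \<Rightarrow> bool" where
  "is_strategy G P \<sigma> \<longleftrightarrow>
     (\<forall>s\<in>states G. \<forall>h. valid_run G s h \<and> fst (last_st s h) \<in> P \<and> has_move G (last_st s h)
         \<longrightarrow> avail G (last_st s h) (\<sigma> s h)) \<and>
     (\<forall>s\<in>states G. \<forall>h. valid_run G s h \<and> fst (last_st s h) \<in> P \<longrightarrow>
         (\<exists>k. \<not> (is_delay (\<sigma> s (ext \<sigma> s h k)) \<and>
                  avail G (last_st s (ext \<sigma> s h k)) (\<sigma> s (ext \<sigma> s h k)))))"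

text \<open>The first n transitions of Run(s, mu, chi) (fewer if the run is finite and shorter).\<close>
primrec outc :: "'l game \<Rightarrow> 'l strategy \<Rightarrow> 'l strategy \<Rightarrow> 'l \<times> real \<Rightarrow> nat \<Rightarrow> 'l trans list" where
  "outc G \<mu> \<chi> s 0 = []"
| "outc G \<mu> \<chi> s (Suc n) =
     (let h = outc G \<mu> \<chi> s n; s' = last_st s h in
      if has_move G s' then h @ [if fst s' \<in> LMin G then \<mu> s h else \<chi> s h] else h)"

definition visits_goal_at :: "'l game \<Rightarrow> 'l strategy \<Rightarrow> 'l strategy \<Rightarrow> 'l \<times> real \<Rightarrow> nat \<Rightarrow> bool" where
  "visits_goal_at G \<mu> \<chi> s n \<longleftrightarrow>
     length (outc G \<mu> \<chi> s n) = n \<and> fst (last_st s (outc G \<mu> \<chi> s n)) \<in> Goal G"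

definition run_cost :: "'l game \<Rightarrow> 'l \<times> real \<Rightarrow> 'l strategy \<Rightarrow> 'l strategy \<Rightarrow> ereal" where
  "run_cost G s \<mu> \<chi> =
     (if \<exists>n. visits_goal_at G \<mu> \<chi> s n then
        (let n = (LEAST n. visits_goal_at G \<mu> \<chi> s n); h = outc G \<mu> \<chi> s n; s' = last_st s h in
         ereal (gcost G (fst s') (snd s') + run_price G s h))
      else \<infinity>)"

definition OptCost :: "'l game \<Rightarrow> 'l \<times> real \<Rightarrow> ereal" where
  "OptCost G s = (INF \<mu>\<in>{\<mu>. is_strategy G (LMin G) \<mu>}.
                    SUP \<chi>\<in>{\<chi>. is_strategy G (LMax G) \<chi>}. run_cost G s \<mu> \<chi>)"

end

theory Submission imports Defs begin

lemma last_st_append[simp]: "last_st s (a @ b) = last_st (last_st s a) b"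
  by (induction a arbitrary: s) auto
lemma valid_run_append[simp]: "valid_run G s (a @ b) \<longleftrightarrow> valid_run G s a \<and> valid_run G (last_st s a) b"
  by (induction a arbitrary: s) auto
lemma run_price_append[simp]: "run_price G s (a @ b) = run_price G s a + run_price G (last_st s a) b"
  by (induction a arbitrary: s) auto

lemma tgt_states:
  assumes "wf_game G" "s \<in> states G" "avail G s \<tau>" shows "tgt s \<tau> \<in> states G"
  using assms by (cases s; cases \<tau>) (auto simp: states_def wf_game_def)

lemma valid_states:
  assumes "wf_game G" "s \<in> states G" "valid_run G s h" shows "last_st s h \<in> states G"
  using assms(2,3) by (induction h arbitrary: s) (simp_all add: tgt_states[OF assms(1)])

lemma ext_append: "\<exists>r. ext \<sigma> s h k = h @ r"
  by (induction k) auto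

lemma ext_add: "ext \<sigma> s h (a + b) = ext \<sigma> s (ext \<sigma> s h a) b"
  by (induction b) auto

lemma valid_take_avail:
  assumes "valid_run G s q" "i < length q" shows "avail G (last_st s (take i q)) (q ! i)"
proof -
  have "q = take i q @ (q ! i) # drop (Suc i) q" using assms(2) by (simp add: Cons_nth_drop_Suc)
  then have "valid_run G s (take i q @ (q ! i) # drop (Suc i) q)" using assms(1) by simp
  then show ?thesis by simp
qed

lemma ext_len: "length (ext \<sigma> s h k) = length h + k"
  by (induction k) auto

definition dflt :: "'l game \<Rightarrow> 'l strategy" where
  "dflt G s h = (case last_st s h of (l, x) \<Rightarrow>
     if \<exists>l'. (l, l') \<in> Edges G then Disc (SOME l'. (l, l') \<in> Edges G) else Delay (ub G - x))"

lemma dflt_strategy: fixes G :: "'l game" shows "is_strategy G P (dflt G)"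
  unfolding is_strategy_def
proof (intro conjI ballI allI impI)
  fix s :: "'l \<times> real" and h
  assume "valid_run G s h \<and> fst (last_st s h) \<in> P \<and> has_move G (last_st s h)"
  then have hm: "has_move G (last_st s h)" by simp
  obtain l x where lx: "last_st s h = (l, x)" by fastforce
  show "avail G (last_st s h) (dflt G s h)"
  proof (cases "\<exists>l'. (l, l') \<in> Edges G")
    case True
    then show ?thesis using lx by (simp add: dflt_def) (metis someI_ex)
  next
    case False
    from hm lx obtain \<tau> where "avail G (l, x) \<tau>" by (auto simp: has_move_def)
    with False obtain t where "0 < t" "\<not> urgent G l" "x + t \<le> ub G" by (cases \<tau>) auto
    then show ?thesis using lx False by (simp add: dflt_def)
  qed
next
  fix s :: "'l \<times> real" and h
  obtain l x where lx: "last_st s h = (l, x)" by fastforce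
  show "\<exists>k. \<not> (is_delay (dflt G s (ext (dflt G) s h k)) \<and>
                  avail G (last_st s (ext (dflt G) s h k)) (dflt G s (ext (dflt G) s h k)))"
  proof (cases "\<exists>l'. (l, l') \<in> Edges G")
    case True
    then have "\<not> is_delay (dflt G s (ext (dflt G) s h 0))" using lx by (simp add: dflt_def is_delay_def)
    then show ?thesis by blast
  next
    case False
    show ?thesis
    proof (cases "avail G (l, x) (Delay (ub G - x))")
      case True
      have "\<not> avail G (last_st s (ext (dflt G) s h 1)) (dflt G s (ext (dflt G) s h 1))"
        using lx False by (simp add: dflt_def)
      then show ?thesis by blast
    next
      case f2: False
      have "\<not> avail G (last_st s (ext (dflt G) s h 0)) (dflt G s (ext (dflt G) s h 0))"
        using lx False f2 by (simp add: dflt_def)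
      then show ?thesis by blast
    qed
  qed
qed

definition pp :: "'l \<times> real \<Rightarrow> 'l trans list \<Rightarrow> 'l strategy \<Rightarrow> 'l strategy" where
  "pp s0 q \<sigma> s h = (if s = s0 \<and> length h < length q \<and> take (length h) q = h then q ! length h else \<sigma> s h)"

lemma pp_ext:
  assumes "length h + j \<le> length q" "take (length h) q = h"
  shows "ext (pp s0 q \<sigma>) s0 h j = take (length h + j) q"
  using assms(1)
proof (induction j)
  case 0 then show ?case using assms(2) by simp
next
  case (Suc j)
  then have IH: "ext (pp s0 q \<sigma>) s0 h j = take (length h + j) q" by simp
  have "pp s0 q \<sigma> s0 (take (length h + j) q) = q ! (length h + j)"
    using Suc.prems by (simp add: pp_def min_def)
  then show ?case using IH Suc.prems by (simp add: take_Suc_conv_app_nth)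
qed

lemma pp_strategy:
  fixes G :: "'l game"
  assumes str: "is_strategy G P \<sigma>" and vq: "valid_run G s0 q" and nd: "q \<noteq> []" "\<not> is_delay (last q)"
  shows "is_strategy G P (pp s0 q \<sigma>)"
  unfolding is_strategy_def
proof (intro conjI ballI allI impI)
  fix s :: "'l \<times> real" and h
  assume s: "s \<in> states G" and h: "valid_run G s h \<and> fst (last_st s h) \<in> P \<and> has_move G (last_st s h)"
  show "avail G (last_st s h) (pp s0 q \<sigma> s h)"
  proof (cases "s = s0 \<and> length h < length q \<and> take (length h) q = h")
    case True
    then show ?thesis using valid_take_avail[OF vq, of "length h"] by (simp add: pp_def)
  next
    case False
    then show ?thesis using str s h unfolding is_strategy_def pp_def by auto
  qed
next
  fix s :: "'l \<times> real" and h
  assume s: "s \<in> states G" and h: "valid_run G s h \<and> fst (last_st s h) \<in> P"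
  show "\<exists>k. \<not> (is_delay (pp s0 q \<sigma> s (ext (pp s0 q \<sigma>) s h k)) \<and>
                  avail G (last_st s (ext (pp s0 q \<sigma>) s h k)) (pp s0 q \<sigma> s (ext (pp s0 q \<sigma>) s h k)))"
  proof (cases "s = s0 \<and> length h < length q \<and> take (length h) q = h")
    case True
    define j where "j = length q - 1 - length h"
    have e: "ext (pp s0 q \<sigma>) s h j = take (length q - 1) q"
      using pp_ext[of h j q s0 \<sigma>] True unfolding j_def by auto
    have "pp s0 q \<sigma> s (take (length q - 1) q) = last q"
    proof -
      have L: "length (take (length q - 1) q) = length q - 1" "length q - 1 < length q" using nd by auto
      show ?thesis unfolding pp_def using L True nd by (simp add: last_conv_nth)
    qed
    then have "\<not> is_delay (pp s0 q \<sigma> s (ext (pp s0 q \<sigma>) s h j))" using e nd by simp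
    then show ?thesis by blast
  next
    case False
    have eq: "ext (pp s0 q \<sigma>) s h j = ext \<sigma> s h j" for j
    proof (induction j)
      case 0 then show ?case by simp
    next
      case (Suc j)
      obtain r where r: "ext \<sigma> s h j = h @ r" using ext_append by blast
      have nP: "\<not> (s = s0 \<and> length (h @ r) < length q \<and> take (length (h @ r)) q = h @ r)"
      proof
        assume a: "s = s0 \<and> length (h @ r) < length q \<and> take (length (h @ r)) q = h @ r"
        have "take (length h) q = take (length h) (take (length (h @ r)) q)" by (simp add: min_def)
        also have "\<dots> = take (length h) (h @ r)" using a by (simp only:)
        also have "\<dots> = h" by simp
        finally show False using False a by simp
      qed
      have pe: "pp s0 q \<sigma> s (h @ r) = \<sigma> s (h @ r)" unfolding pp_def by (rule if_not_P[OF nP])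
      show ?case using Suc.IH r pe by simp
    qed
    from str s h obtain k where "\<not> (is_delay (\<sigma> s (ext \<sigma> s h k)) \<and>
                  avail G (last_st s (ext \<sigma> s h k)) (\<sigma> s (ext \<sigma> s h k)))"
      unfolding is_strategy_def by blast
    moreover have "pp s0 q \<sigma> s (ext \<sigma> s h k) = \<sigma> s (ext \<sigma> s h k)"
      using eq[of "Suc k"] eq[of k] by simp
    ultimately show ?thesis using eq[of k] by metis
  qed
qed

definition antichain :: "'l trans list set \<Rightarrow> bool" where
  "antichain Q \<longleftrightarrow> (\<forall>q1\<in>Q. \<forall>q2\<in>Q. take (length q1) q2 = q1 \<longrightarrow> q1 = q2)"

definition graft :: "'l \<times> real \<Rightarrow> 'l trans list set \<Rightarrow> ('l trans list \<Rightarrow> 'l strategy) \<Rightarrow> 'l strategy \<Rightarrow> 'l strategy" where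
  "graft s0 Q \<tau> \<sigma> s h = (if s = s0 \<and> (\<exists>q\<in>Q. take (length q) h = q)
     then (let q = THE q. q \<in> Q \<and> take (length q) h = q in \<tau> q (last_st s0 q) (drop (length q) h))
     else \<sigma> s h)"

lemma antichain_unique:
  assumes "antichain Q" "q1 \<in> Q" "q2 \<in> Q" "take (length q1) h = q1" "take (length q2) h = q2"
  shows "q1 = q2"
proof (cases "length q1 \<le> length q2")
  case True
  have "take (length q1) q2 = take (length q1) (take (length q2) h)" using assms(5) by simp
  also have "\<dots> = q1" using True assms(4) by (simp add: min_def)
  finally show ?thesis using assms(1-3) unfolding antichain_def by blast
next
  case False
  have "take (length q2) q1 = take (length q2) (take (length q1) h)" using assms(4) by simp
  also have "\<dots> = q2" using False assms(5) by (simp add: min_def)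
  finally show ?thesis using assms(1-3) unfolding antichain_def by metis
qed

lemma the_q:
  assumes "antichain Q" "q \<in> Q" "take (length q) h = q"
  shows "(THE q. q \<in> Q \<and> take (length q) h = q) = q"
  using assms antichain_unique[OF assms(1)] by blast

lemma graft_at:
  assumes "antichain Q" "q \<in> Q"
  shows "graft s0 Q \<tau> \<sigma> s0 (q @ h) = \<tau> q (last_st s0 q) h"
proof -
  have t: "take (length q) (q @ h) = q" by simp
  show ?thesis unfolding graft_def using the_q[OF assms t] assms(2) t by auto
qed

lemma graft_other:
  "\<not> (s = s0 \<and> (\<exists>q\<in>Q. take (length q) h = q)) \<Longrightarrow> graft s0 Q \<tau> \<sigma> s h = \<sigma> s h"
  unfolding graft_def by (rule if_not_P)

lemma graft_strategy:
  fixes G :: "'l game"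
  assumes str: "is_strategy G P \<sigma>" and strq: "\<forall>q\<in>Q. is_strategy G P (\<tau> q)"
    and vq: "\<forall>q\<in>Q. valid_run G s0 q \<and> q \<noteq> [] \<and> \<not> is_delay (last q)"
    and ac: "antichain Q" and wf: "wf_game G" and s0: "s0 \<in> states G"
  shows "is_strategy G P (graft s0 Q \<tau> \<sigma>)"
  unfolding is_strategy_def
proof (intro conjI ballI allI impI)
  fix s :: "'l \<times> real" and h
  assume s: "s \<in> states G" and h: "valid_run G s h \<and> fst (last_st s h) \<in> P \<and> has_move G (last_st s h)"
  show "avail G (last_st s h) (graft s0 Q \<tau> \<sigma> s h)"
  proof (cases "s = s0 \<and> (\<exists>q\<in>Q. take (length q) h = q)")
    case True
    then obtain q where q: "q \<in> Q" "take (length q) h = q" by blast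
    define h' where "h' = drop (length q) h"
    have hq: "h = q @ h'" unfolding h'_def using q(2) by (metis append_take_drop_id)
    have g: "graft s0 Q \<tau> \<sigma> s h = \<tau> q (last_st s0 q) h'" using graft_at[OF ac q(1)] hq True by simp
    have v: "valid_run G (last_st s0 q) h'" using h hq True by simp
    have st: "last_st s0 q \<in> states G" using valid_states[OF wf s0] vq q(1) by blast
    have "avail G (last_st (last_st s0 q) h') (\<tau> q (last_st s0 q) h')"
      using strq q(1) st v h hq True unfolding is_strategy_def by auto
    then show ?thesis using g hq True by simp
  next
    case False
    then show ?thesis using str s h graft_other[OF False] unfolding is_strategy_def by auto
  qed
next
  fix s :: "'l \<times> real" and h
  assume s: "s \<in> states G" and h: "valid_run G s h \<and> fst (last_st s h) \<in> P"
  let ?g = "graft s0 Q \<tau> \<sigma>"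
  show "\<exists>k. \<not> (is_delay (?g s (ext ?g s h k)) \<and>
                  avail G (last_st s (ext ?g s h k)) (?g s (ext ?g s h k)))"
  proof (cases "s = s0 \<and> (\<exists>q\<in>Q. take (length q) h = q)")
    case True
    then obtain q where q: "q \<in> Q" "take (length q) h = q" by blast
    define h' where "h' = drop (length q) h"
    have hq: "h = q @ h'" unfolding h'_def using q(2) by (metis append_take_drop_id)
    let ?s' = "last_st s0 q"
    have eq: "ext ?g s h j = q @ ext (\<tau> q) ?s' h' j" for j
    proof (induction j)
      case 0 then show ?case using hq by simp
    next
      case (Suc j)
      then show ?case using graft_at[OF ac q(1)] True by simp
    qed
    have v: "valid_run G ?s' h'" using h hq True by simp
    have st: "?s' \<in> states G" using valid_states[OF wf s0] vq q(1) by blast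
    have "fst (last_st ?s' h') \<in> P" using h hq True by simp
    then obtain k where k: "\<not> (is_delay (\<tau> q ?s' (ext (\<tau> q) ?s' h' k)) \<and>
                  avail G (last_st ?s' (ext (\<tau> q) ?s' h' k)) (\<tau> q ?s' (ext (\<tau> q) ?s' h' k)))"
      using strq q(1) st v unfolding is_strategy_def by blast
    have "?g s (ext ?g s h k) = \<tau> q ?s' (ext (\<tau> q) ?s' h' k)"
      using eq[of k] graft_at[OF ac q(1)] True by simp
    moreover have "last_st s (ext ?g s h k) = last_st ?s' (ext (\<tau> q) ?s' h' k)"
      using eq[of k] True by simp
    ultimately show ?thesis using k by metis
  next
    case False
    show ?thesis
    proof (cases "\<exists>j. s = s0 \<and> (\<exists>q\<in>Q. take (length q) (ext ?g s h j) = q)")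
      case False2: False
      have eq: "ext ?g s h j = ext \<sigma> s h j" for j
      proof (induction j)
        case 0 then show ?case by simp
      next
        case (Suc j)
        have "?g s (ext ?g s h j) = \<sigma> s (ext ?g s h j)"
          using False2 by (intro graft_other) blast
        then show ?case using Suc by simp
      qed
      from str s h obtain k where "\<not> (is_delay (\<sigma> s (ext \<sigma> s h k)) \<and>
                  avail G (last_st s (ext \<sigma> s h k)) (\<sigma> s (ext \<sigma> s h k)))"
        unfolding is_strategy_def by blast
      moreover have "?g s (ext \<sigma> s h k) = \<sigma> s (ext \<sigma> s h k)"
        using eq[of "Suc k"] eq[of k] by simp
      ultimately show ?thesis using eq[of k] by metis
    next
      case True2: True
      define j0 where "j0 = (LEAST j. s = s0 \<and> (\<exists>q\<in>Q. take (length q) (ext ?g s h j) = q))"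
      have j0: "s = s0 \<and> (\<exists>q\<in>Q. take (length q) (ext ?g s h j0) = q)"
        unfolding j0_def using True2 by (rule LeastI_ex)
      have bef: "\<not> (s = s0 \<and> (\<exists>q\<in>Q. take (length q) (ext ?g s h j) = q))" if "j < j0" for j
        using not_less_Least[OF that[unfolded j0_def]] unfolding j0_def by blast
      have "j0 \<noteq> 0" using j0 False by (metis ext.simps(1))
      then obtain j1 where j1: "j0 = Suc j1" by (cases j0) auto
      let ?E = "ext ?g s h j1"
      let ?c = "?g s ?E"
      have nE: "\<not> (\<exists>q\<in>Q. take (length q) ?E = q)" using bef[of j1] j1 j0 by auto
      have cval: "?c = \<sigma> s ?E" using nE by (intro graft_other) blast
      obtain q where q: "q \<in> Q" "take (length q) (?E @ [?c]) = q" using j0 j1 by auto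
      have "length q > length ?E"
      proof (rule ccontr)
        assume "\<not> length q > length ?E"
        then have "take (length q) (?E @ [?c]) = take (length q) ?E" by simp
        then show False using q nE by auto
      qed
      then have "q = ?E @ [?c]" using q(2) by (metis Suc_leI append_Nil2 length_append_singleton take_all take_append zero_diff)
      then have "?c = last q" by simp
      then have "\<not> is_delay ?c" using vq q(1) by simp
      then show ?thesis by blast
    qed
  qed
qed

definition shiftS :: "'l \<times> real \<Rightarrow> 'l trans list \<Rightarrow> 'l strategy \<Rightarrow> 'l strategy \<Rightarrow> 'l strategy" where
  "shiftS s0 q \<sigma> d s h = (if s = last_st s0 q then \<sigma> s0 (q @ h) else d s h)"

lemma shiftS_strategy:
  fixes G :: "'l game"
  assumes str: "is_strategy G P \<sigma>" and d: "is_strategy G P d" and vq: "valid_run G s0 q"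
    and s0: "s0 \<in> states G"
  shows "is_strategy G P (shiftS s0 q \<sigma> d)"
  unfolding is_strategy_def
proof (intro conjI ballI allI impI)
  fix s :: "'l \<times> real" and h
  assume s: "s \<in> states G" and h: "valid_run G s h \<and> fst (last_st s h) \<in> P \<and> has_move G (last_st s h)"
  show "avail G (last_st s h) (shiftS s0 q \<sigma> d s h)"
  proof (cases "s = last_st s0 q")
    case True
    then have "valid_run G s0 (q @ h) \<and> fst (last_st s0 (q @ h)) \<in> P \<and> has_move G (last_st s0 (q @ h))"
      using h vq by simp
    then have "avail G (last_st s0 (q @ h)) (\<sigma> s0 (q @ h))" using str s0 unfolding is_strategy_def by blast
    then show ?thesis using True by (simp add: shiftS_def)
  next
    case False
    then show ?thesis using d s h unfolding is_strategy_def shiftS_def by auto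
  qed
next
  fix s :: "'l \<times> real" and h
  assume s: "s \<in> states G" and h: "valid_run G s h \<and> fst (last_st s h) \<in> P"
  let ?g = "shiftS s0 q \<sigma> d"
  show "\<exists>k. \<not> (is_delay (?g s (ext ?g s h k)) \<and>
                  avail G (last_st s (ext ?g s h k)) (?g s (ext ?g s h k)))"
  proof (cases "s = last_st s0 q")
    case True
    have eq: "q @ ext ?g s h j = ext \<sigma> s0 (q @ h) j" for j
      by (induction j) (auto simp: shiftS_def True)
    have "valid_run G s0 (q @ h) \<and> fst (last_st s0 (q @ h)) \<in> P" using h vq True by simp
    then obtain k where k: "\<not> (is_delay (\<sigma> s0 (ext \<sigma> s0 (q @ h) k)) \<and>
                  avail G (last_st s0 (ext \<sigma> s0 (q @ h) k)) (\<sigma> s0 (ext \<sigma> s0 (q @ h) k)))"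
      using str s0 unfolding is_strategy_def by blast
    have "?g s (ext ?g s h k) = \<sigma> s0 (ext \<sigma> s0 (q @ h) k)"
      using eq[of k] True by (simp add: shiftS_def)
    moreover have "last_st s (ext ?g s h k) = last_st s0 (ext \<sigma> s0 (q @ h) k)"
      using eq[of k, symmetric] True by simp
    ultimately show ?thesis using k by metis
  next
    case False
    have eq: "ext ?g s h j = ext d s h j" for j
      by (induction j) (auto simp: shiftS_def False)
    from d s h obtain k where "\<not> (is_delay (d s (ext d s h k)) \<and>
                  avail G (last_st s (ext d s h k)) (d s (ext d s h k)))"
      unfolding is_strategy_def by blast
    then show ?thesis using eq[of k] False by (metis shiftS_def)
  qed
qed

lemma outc_len: "length (outc G \<mu> \<chi> s n) \<le> n"
  by (induction n) (auto simp: Let_def)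

lemma outc_step: "\<exists>r. outc G \<mu> \<chi> s (Suc n) = outc G \<mu> \<chi> s n @ r \<and> length r \<le> 1"
  by (auto simp: Let_def)

lemma outc_prefix:
  assumes "i \<le> m"
  shows "\<exists>r. outc G \<mu> \<chi> s m = outc G \<mu> \<chi> s i @ r \<and> length r \<le> m - i"
  using assms
proof (induction m rule: dec_induct)
  case base then show ?case by simp
next
  case (step m)
  then obtain r where r: "outc G \<mu> \<chi> s m = outc G \<mu> \<chi> s i @ r" "length r \<le> m - i" by blast
  obtain r' where r': "outc G \<mu> \<chi> s (Suc m) = outc G \<mu> \<chi> s m @ r'" "length r' \<le> 1"
    using outc_step by blast
  show ?case using r r' step.hyps by (intro exI[of _ "r @ r'"]) auto
qed

lemma outc_take:
  assumes "length (outc G \<mu> \<chi> s m) = m" "i \<le> m"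
  shows "outc G \<mu> \<chi> s i = take i (outc G \<mu> \<chi> s m)"
proof -
  obtain r where r: "outc G \<mu> \<chi> s m = outc G \<mu> \<chi> s i @ r" "length r \<le> m - i"
    using outc_prefix[OF assms(2)] by blast
  have "length (outc G \<mu> \<chi> s i) \<le> i" by (rule outc_len)
  then have "length (outc G \<mu> \<chi> s i) = i" using r assms by auto
  then show ?thesis using r by simp
qed

lemma outc_shift:
  assumes "outc G \<mu> \<chi> s m = q"
    and "\<forall>h. \<mu>' (last_st s q) h = \<mu> s (q @ h)" "\<forall>h. \<chi>' (last_st s q) h = \<chi> s (q @ h)"
  shows "outc G \<mu> \<chi> s (m + n) = q @ outc G \<mu>' \<chi>' (last_st s q) n"
  using assms by (induction n) (auto simp: Let_def)

lemma Least_shift: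
  fixes m :: nat
  assumes "\<forall>i<m. \<not> P i" "\<exists>n. P (m + n)"
  shows "(LEAST n. P n) = m + (LEAST n. P (m + n))"
proof (rule Least_equality)
  show "P (m + (LEAST n. P (m + n)))" using assms(2) by (rule LeastI_ex)
next
  fix y assume "P y"
  then have "y \<ge> m" using assms(1) by (meson not_le)
  then have "P (m + (y - m))" using \<open>P y\<close> by simp
  then have "(LEAST n. P (m + n)) \<le> y - m" by (rule Least_le)
  then show "m + (LEAST n. P (m + n)) \<le> y" using \<open>y \<ge> m\<close> by simp
qed

lemma run_cost_shift:
  assumes oq: "outc G \<mu> \<chi> s m = q" and lq: "length q = m"
    and ng: "\<forall>i<m. fst (last_st s (take i q)) \<notin> Goal G"
    and sm: "\<forall>h. \<mu>' (last_st s q) h = \<mu> s (q @ h)" and sc: "\<forall>h. \<chi>' (last_st s q) h = \<chi> s (q @ h)"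
  shows "run_cost G s \<mu> \<chi> = ereal (run_price G s q) + run_cost G (last_st s q) \<mu>' \<chi>'"
proof -
  let ?s' = "last_st s q"
  have sh: "outc G \<mu> \<chi> s (m + n) = q @ outc G \<mu>' \<chi>' ?s' n" for n
    by (rule outc_shift[where \<mu>'=\<mu>' and \<chi>'=\<chi>', OF oq sm sc])
  have vis: "visits_goal_at G \<mu> \<chi> s (m + n) \<longleftrightarrow> visits_goal_at G \<mu>' \<chi>' ?s' n" for n
    unfolding visits_goal_at_def sh using lq by simp
  have nvis: "\<forall>i<m. \<not> visits_goal_at G \<mu> \<chi> s i"
  proof (intro allI impI)
    fix i assume "i < m"
    then have "outc G \<mu> \<chi> s i = take i q" using outc_take[of G \<mu> \<chi> s m i] oq lq by simp
    then show "\<not> visits_goal_at G \<mu> \<chi> s i" using ng \<open>i < m\<close> unfolding visits_goal_at_def by simp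
  qed
  show ?thesis
  proof (cases "\<exists>n. visits_goal_at G \<mu>' \<chi>' ?s' n")
    case True
    then have ex: "\<exists>n. visits_goal_at G \<mu> \<chi> s (m + n)" using vis by blast
    then have ex2: "\<exists>n. visits_goal_at G \<mu> \<chi> s n" by blast
    define N where "N = (LEAST n. visits_goal_at G \<mu>' \<chi>' ?s' n)"
    have L: "(LEAST n. visits_goal_at G \<mu> \<chi> s n) = m + N"
      unfolding N_def using Least_shift[OF nvis ex] vis by simp
    show ?thesis unfolding run_cost_def using True ex2 L sh[of N]
      by (simp add: Let_def N_def[symmetric])
  next
    case False
    have "\<not> (\<exists>n. visits_goal_at G \<mu> \<chi> s n)"
    proof
      assume "\<exists>n. visits_goal_at G \<mu> \<chi> s n"
      then obtain n where n: "visits_goal_at G \<mu> \<chi> s n" by blast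
      then have "n \<ge> m" using nvis by (meson not_le)
      then have "visits_goal_at G \<mu> \<chi> s (m + (n - m))" using n by simp
      then show False using vis False by blast
    qed
    then have a: "(\<exists>n. visits_goal_at G \<mu> \<chi> s n) = False" by simp
    have b: "(\<exists>n. visits_goal_at G \<mu>' \<chi>' ?s' n) = False" using False by simp
    show ?thesis unfolding run_cost_def a b if_False by simp
  qed
qed

lemma outc_solo_min:
  assumes "\<forall>j<m. has_move G (last_st s (ext \<mu> s [] j)) \<and> fst (last_st s (ext \<mu> s [] j)) \<in> LMin G"
  shows "outc G \<mu> \<chi> s m = ext \<mu> s [] m"
  using assms by (induction m) (auto simp: Let_def)

lemma outc_solo_max:
  assumes "\<forall>j<m. has_move G (last_st s (ext \<chi> s [] j)) \<and> fst (last_st s (ext \<chi> s [] j)) \<notin> LMin G"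
  shows "outc G \<mu> \<chi> s m = ext \<chi> s [] m"
  using assms by (induction m) (auto simp: Let_def)

lemma graft_pp_ext:
  assumes "j \<le> length q"
  shows "ext (graft s0 {q} \<tau> (pp s0 q \<sigma>)) s0 [] j = take j q"
  using assms
proof (induction j)
  case 0 then show ?case by simp
next
  case (Suc j)
  then have IH: "ext (graft s0 {q} \<tau> (pp s0 q \<sigma>)) s0 [] j = take j q" by simp
  have l: "length (take j q) = j" using Suc.prems by simp
  have "\<not> (s0 = s0 \<and> (\<exists>q'\<in>{q}. take (length q') (take j q) = q'))"
  proof
    assume "s0 = s0 \<and> (\<exists>q'\<in>{q}. take (length q') (take j q) = q')"
    then have "take (length q) (take j q) = q" by simp
    then have "length (take (length q) (take j q)) = length q" by simp
    then show False using Suc.prems by simp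
  qed
  then have "graft s0 {q} \<tau> (pp s0 q \<sigma>) s0 (take j q) = pp s0 q \<sigma> s0 (take j q)" by (rule graft_other)
  also have "\<dots> = q ! j" using Suc.prems l by (simp add: pp_def)
  finally show ?case using IH Suc.prems by (simp add: take_Suc_conv_app_nth)
qed

lemma q_props:
  fixes G :: "'l game" and x t :: real
  assumes e: "(l, l') \<in> Edges G" and nu: "\<not> urgent G l" and t: "0 \<le> t" "x + t \<le> ub G"
    and q: "q = (if t = 0 then [Disc l'] else [Delay t, Disc l'])"
  shows "valid_run G (l, x) q" "q \<noteq> []" "\<not> is_delay (last q)" "last_st (l, x) q = (l', x + t)"
    "run_price G (l, x) q = real (rate G l) * t" "\<forall>i<length q. fst (last_st (l, x) (take i q)) = l"
proof -
  show "valid_run G (l, x) q" "q \<noteq> []" "\<not> is_delay (last q)" "last_st (l, x) q = (l', x + t)"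
    "run_price G (l, x) q = real (rate G l) * t"
    using assms by (auto simp: is_delay_def)
  show "\<forall>i<length q. fst (last_st (l, x) (take i q)) = l"
  proof (intro allI impI)
    fix i assume "i < length q"
    then show "fst (last_st (l, x) (take i q)) = l"
      using q by (cases i; cases "t = 0") (auto simp: less_Suc_eq)
  qed
qed

lemma ereal_shift_le: "(ereal r \<le> ereal c + y) \<longleftrightarrow> (ereal (r - c) \<le> y)"
  by (cases y) auto

lemma min_upper:
  fixes G :: "'l game" and x t :: real
  assumes wf: "wf_game G" and lmin: "l \<in> LMin G" and s0: "(l, x) \<in> states G"
    and e: "(l, l') \<in> Edges G" and nu: "\<not> urgent G l" and t: "0 \<le> t" "x + t \<le> ub G"
    and ng: "l \<notin> Goal G" and r: "OptCost G (l, x) = ereal r"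
  shows "ereal r \<le> ereal (real (rate G l) * t) + OptCost G (l', x + t)"
proof -
  define q where "q = (if t = 0 then [Disc l'] else [Delay t, Disc l'])"
  note qp = q_props[OF e nu t q_def]
  let ?s0 = "(l, x)" and ?s' = "(l', x + t)"
  let ?SMin = "{\<mu>. is_strategy G (LMin G) \<mu>}" and ?SMax = "{\<chi>. is_strategy G (LMax G) \<chi>}"
  let ?c = "real (rate G l) * t"
  have "\<forall>\<mu>'\<in>?SMin. ereal (r - ?c) \<le> (SUP \<chi>'\<in>?SMax. run_cost G ?s' \<mu>' \<chi>')"
  proof
    fix \<mu>' assume \<mu>': "\<mu>' \<in> ?SMin"
    define \<mu> where "\<mu> = graft ?s0 {q} (\<lambda>_. \<mu>') (pp ?s0 q (dflt G))"
    have \<mu>S: "\<mu> \<in> ?SMin" unfolding \<mu>_def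
      using graft_strategy[OF pp_strategy[OF dflt_strategy qp(1) qp(2) qp(3)], where Q="{q}" and \<tau>="\<lambda>_. \<mu>'"]
        \<mu>' qp wf s0 by (auto simp: antichain_def)
    have "ereal r \<le> (SUP \<chi>\<in>?SMax. run_cost G ?s0 \<mu> \<chi>)"
      using r \<mu>S unfolding OptCost_def by (metis INF_lower)
    also have "\<dots> \<le> ereal ?c + (SUP \<chi>'\<in>?SMax. run_cost G ?s' \<mu>' \<chi>')"
    proof (rule SUP_least)
      fix \<chi> assume \<chi>: "\<chi> \<in> ?SMax"
      define \<chi>'' where "\<chi>'' = shiftS ?s0 q \<chi> (dflt G)"
      have \<chi>S: "\<chi>'' \<in> ?SMax" unfolding \<chi>''_def
        using shiftS_strategy[OF _ dflt_strategy qp(1) s0] \<chi> by simp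
      have ex: "ext \<mu> ?s0 [] j = take j q" if "j \<le> length q" for j
        unfolding \<mu>_def using graft_pp_ext that by blast
      have oq: "outc G \<mu> \<chi> ?s0 (length q) = q"
      proof -
        have "\<forall>j<length q. has_move G (last_st ?s0 (ext \<mu> ?s0 [] j)) \<and> fst (last_st ?s0 (ext \<mu> ?s0 [] j)) \<in> LMin G"
        proof (intro allI impI)
          fix j assume j: "j < length q"
          then have loc: "fst (last_st ?s0 (ext \<mu> ?s0 [] j)) = l" using ex qp(6) by simp
          then have "avail G (last_st ?s0 (ext \<mu> ?s0 [] j)) (Disc l')" using e
            by (metis avail.simps(1) prod.collapse)
          then show "has_move G (last_st ?s0 (ext \<mu> ?s0 [] j)) \<and> fst (last_st ?s0 (ext \<mu> ?s0 [] j)) \<in> LMin G"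
            using loc lmin unfolding has_move_def by auto
        qed
        then show ?thesis using outc_solo_min[of "length q" G "(l, x)" \<mu> \<chi>] ex[of "length q"] by simp
      qed
      have rc: "run_cost G ?s0 \<mu> \<chi> = ereal (run_price G ?s0 q) + run_cost G (last_st ?s0 q) \<mu>' \<chi>''"
      proof (rule run_cost_shift[OF oq refl])
        show "\<forall>i<length q. fst (last_st ?s0 (take i q)) \<notin> Goal G" using qp(6) ng by simp
        show "\<forall>h. \<mu>' (last_st ?s0 q) h = \<mu> ?s0 (q @ h)"
          unfolding \<mu>_def using graft_at[of "{q}" q] by (simp add: antichain_def)
        show "\<forall>h. \<chi>'' (last_st ?s0 q) h = \<chi> ?s0 (q @ h)"
          unfolding \<chi>''_def by (simp add: shiftS_def)
      qed
      have "run_cost G ?s' \<mu>' \<chi>'' \<le> (SUP \<chi>'\<in>?SMax. run_cost G ?s' \<mu>' \<chi>')"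
        using \<chi>S by (rule SUP_upper)
      then show "run_cost G ?s0 \<mu> \<chi> \<le> ereal ?c + (SUP \<chi>'\<in>?SMax. run_cost G ?s' \<mu>' \<chi>')"
        using rc qp(4,5) by (simp add: add_left_mono)
    qed
    finally show "ereal (r - ?c) \<le> (SUP \<chi>'\<in>?SMax. run_cost G ?s' \<mu>' \<chi>')"
      using ereal_shift_le by blast
  qed
  then have "ereal (r - ?c) \<le> OptCost G ?s'" unfolding OptCost_def by (auto intro: INF_greatest)
  then show ?thesis using ereal_shift_le by blast
qed

lemma max_lower:
  fixes G :: "'l game" and x t :: real
  assumes wf: "wf_game G" and lmax: "l \<in> LMax G" and s0: "(l, x) \<in> states G"
    and e: "(l, l') \<in> Edges G" and nu: "\<not> urgent G l" and t: "0 \<le> t" "x + t \<le> ub G"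
    and ng: "l \<notin> Goal G"
  shows "ereal (real (rate G l) * t) + OptCost G (l', x + t) \<le> OptCost G (l, x)"
proof -
  define q where "q = (if t = 0 then [Disc l'] else [Delay t, Disc l'])"
  note qp = q_props[OF e nu t q_def]
  have lnm: "l \<notin> LMin G" using wf lmax unfolding wf_game_def by blast
  let ?s0 = "(l, x)" and ?s' = "(l', x + t)"
  let ?SMin = "{\<mu>. is_strategy G (LMin G) \<mu>}" and ?SMax = "{\<chi>. is_strategy G (LMax G) \<chi>}"
  let ?c = "real (rate G l) * t"
  have ne: "?SMax \<noteq> {}" using dflt_strategy by blast
  show ?thesis unfolding OptCost_def[of G ?s0]
  proof (rule INF_greatest)
    fix \<mu> assume \<mu>: "\<mu> \<in> ?SMin"
    define \<mu>'' where "\<mu>'' = shiftS ?s0 q \<mu> (dflt G)"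
    have \<mu>S: "\<mu>'' \<in> ?SMin" unfolding \<mu>''_def
      using shiftS_strategy[OF _ dflt_strategy qp(1) s0] \<mu> by simp
    have "ereal ?c + OptCost G ?s' \<le> ereal ?c + (SUP \<chi>'\<in>?SMax. run_cost G ?s' \<mu>'' \<chi>')"
      using \<mu>S unfolding OptCost_def by (intro add_left_mono INF_lower) 
    also have "\<dots> = (SUP \<chi>'\<in>?SMax. ereal ?c + run_cost G ?s' \<mu>'' \<chi>')"
      using ne by (simp add: SUP_ereal_add_right)
    also have "\<dots> \<le> (SUP \<chi>\<in>?SMax. run_cost G ?s0 \<mu> \<chi>)"
    proof (rule SUP_least)
      fix \<chi>' assume \<chi>': "\<chi>' \<in> ?SMax"
      define \<chi> where "\<chi> = graft ?s0 {q} (\<lambda>_. \<chi>') (pp ?s0 q (dflt G))"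
      have \<chi>S: "\<chi> \<in> ?SMax" unfolding \<chi>_def
        using graft_strategy[OF pp_strategy[OF dflt_strategy qp(1) qp(2) qp(3)], where Q="{q}" and \<tau>="\<lambda>_. \<chi>'"]
          \<chi>' qp wf s0 by (auto simp: antichain_def)
      have ex: "ext \<chi> ?s0 [] j = take j q" if "j \<le> length q" for j
        unfolding \<chi>_def using graft_pp_ext that by blast
      have oq: "outc G \<mu> \<chi> ?s0 (length q) = q"
      proof -
        have "\<forall>j<length q. has_move G (last_st ?s0 (ext \<chi> ?s0 [] j)) \<and> fst (last_st ?s0 (ext \<chi> ?s0 [] j)) \<notin> LMin G"
        proof (intro allI impI)
          fix j assume j: "j < length q"
          then have loc: "fst (last_st ?s0 (ext \<chi> ?s0 [] j)) = l" using ex qp(6) by simp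
          then have "avail G (last_st ?s0 (ext \<chi> ?s0 [] j)) (Disc l')" using e
            by (metis avail.simps(1) prod.collapse)
          then show "has_move G (last_st ?s0 (ext \<chi> ?s0 [] j)) \<and> fst (last_st ?s0 (ext \<chi> ?s0 [] j)) \<notin> LMin G"
            using loc lnm unfolding has_move_def by auto
        qed
        then show ?thesis using outc_solo_max[of "length q" G "(l, x)" \<chi> \<mu>] ex[of "length q"] by simp
      qed
      have rc: "run_cost G ?s0 \<mu> \<chi> = ereal (run_price G ?s0 q) + run_cost G (last_st ?s0 q) \<mu>'' \<chi>'"
      proof (rule run_cost_shift[OF oq refl])
        show "\<forall>i<length q. fst (last_st ?s0 (take i q)) \<notin> Goal G" using qp(6) ng by simp
        show "\<forall>h. \<chi>' (last_st ?s0 q) h = \<chi> ?s0 (q @ h)"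
          unfolding \<chi>_def using graft_at[of "{q}" q] by (simp add: antichain_def)
        show "\<forall>h. \<mu>'' (last_st ?s0 q) h = \<mu> ?s0 (q @ h)"
          unfolding \<mu>''_def by (simp add: shiftS_def)
      qed
      have "run_cost G ?s0 \<mu> \<chi> \<le> (SUP \<chi>\<in>?SMax. run_cost G ?s0 \<mu> \<chi>)"
        using \<chi>S by (rule SUP_upper)
      then show "ereal ?c + run_cost G ?s' \<mu>'' \<chi>' \<le> (SUP \<chi>\<in>?SMax. run_cost G ?s0 \<mu> \<chi>)"
        using rc qp(4,5) by simp
    qed
    finally show "ereal ?c + OptCost G ?s' \<le> (SUP \<chi>\<in>?SMax. run_cost G ?s0 \<mu> \<chi>)" .
  qed
qed

lemma delays_price:
  fixes x :: real
  shows "list_all is_delay h \<Longrightarrow> fst (last_st (l, x) h) = l \<and>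
     run_price G (l, x) h = real (rate G l) * (snd (last_st (l, x) h) - x)"
proof (induction h arbitrary: x)
  case Nil then show ?case by simp
next
  case (Cons a h)
  then obtain t where a: "a = Delay t" by (auto simp: is_delay_def)
  have h: "list_all is_delay h" using Cons.prems by simp
  have IH: "fst (last_st (l, x + t) h) = l \<and>
     run_price G (l, x + t) h = real (rate G l) * (snd (last_st (l, x + t) h) - (x + t))"
    using Cons.IH[OF h] .
  then show ?case using a by (simp add: algebra_simps)
qed

lemma delays_mono:
  fixes x :: real
  shows "list_all is_delay h \<Longrightarrow> valid_run G (l, x) h \<Longrightarrow> x \<le> snd (last_st (l, x) h)"
proof (induction h arbitrary: x)
  case Nil then show ?case by simp
next
  case (Cons a h)
  then obtain t where a: "a = Delay t" by (auto simp: is_delay_def)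
  then have "x + t \<le> snd (last_st (l, x + t) h)" "0 < t" using Cons by auto
  then show ?case using a by simp
qed

lemma ext_take:
  assumes "j \<le> n"
  shows "ext \<sigma> s [] j = take j (ext \<sigma> s [] n)"
proof -
  have "ext \<sigma> s [] n = ext \<sigma> s [] (j + (n - j))" using assms by simp
  also have "\<dots> = ext \<sigma> s (ext \<sigma> s [] j) (n - j)" by (rule ext_add)
  finally obtain r where "ext \<sigma> s [] n = ext \<sigma> s [] j @ r" using ext_append by metis
  then show ?thesis using ext_len[of \<sigma> s "[]" j] by simp
qed

lemma exit_q:
  fixes G :: "'l game" and x :: real
  assumes wf: "wf_game G" and str: "is_strategy G P \<sigma>" and s0: "(l, x) \<in> states G"
    and lP: "l \<in> P" and e: "(l, l0) \<in> Edges G"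
  obtains q l' y where "\<forall>j\<le>length q. ext \<sigma> (l, x) [] j = take j q"
    "valid_run G (l, x) q" "q \<noteq> []" "\<not> is_delay (last q)" "last_st (l, x) q = (l', y)"
    "(l, l') \<in> Edges G" "x \<le> y" "y \<le> ub G" "run_price G (l, x) q = real (rate G l) * (y - x)"
    "\<forall>i<length q. fst (last_st (l, x) (take i q)) = l \<and> has_move G (last_st (l, x) (take i q))"
    "list_all is_delay (butlast q)"
proof -
  let ?s0 = "(l, x)"
  let ?E = "\<lambda>j. ext \<sigma> ?s0 [] j"
  let ?B = "\<lambda>k. \<not> (is_delay (\<sigma> ?s0 (?E k)) \<and> avail G (last_st ?s0 (?E k)) (\<sigma> ?s0 (?E k)))"
  have "\<exists>k. ?B k" using str s0 lP unfolding is_strategy_def by fastforce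
  define k where "k = (LEAST k. ?B k)"
  have Bk: "?B k" unfolding k_def using \<open>\<exists>k. ?B k\<close> by (rule LeastI_ex)
  have nB: "\<not> ?B j" if "j < k" for j using not_less_Least[OF that[unfolded k_def]] unfolding k_def .
  have D: "list_all is_delay (?E j) \<and> valid_run G ?s0 (?E j)" if "j \<le> k" for j
    using that
  proof (induction j)
    case 0 then show ?case by simp
  next
    case (Suc j)
    then have "is_delay (\<sigma> ?s0 (?E j)) \<and> avail G (last_st ?s0 (?E j)) (\<sigma> ?s0 (?E j))"
      using nB[of j] by simp
    then show ?case using Suc by simp
  qed
  have "fst (last_st ?s0 (?E k)) = l" using delays_price[of "?E k" l x G] D[of k] by simp
  then obtain y where ly: "last_st ?s0 (?E k) = (l, y)" by (metis prod.collapse)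
  have "avail G (l, y) (Disc l0)" using e by simp
  then have hm: "has_move G (l, y)" unfolding has_move_def by blast
  have c1: "\<forall>s\<in>states G. \<forall>h. valid_run G s h \<and> fst (last_st s h) \<in> P \<and> has_move G (last_st s h)
         \<longrightarrow> avail G (last_st s h) (\<sigma> s h)" using str unfolding is_strategy_def by blast
  have "avail G (last_st ?s0 (?E k)) (\<sigma> ?s0 (?E k))"
    using c1[rule_format, OF s0, of "?E k"] D[of k] ly lP hm by simp
  then have nd: "\<not> is_delay (\<sigma> ?s0 (?E k))" using Bk by blast
  then obtain l' where l': "\<sigma> ?s0 (?E k) = Disc l'" by (cases "\<sigma> ?s0 (?E k)") (auto simp: is_delay_def)
  have el': "(l, l') \<in> Edges G" using \<open>avail G (last_st ?s0 (?E k)) (\<sigma> ?s0 (?E k))\<close> ly l' by simp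
  define q where "q = ?E (Suc k)"
  have q: "q = ?E k @ [Disc l']" unfolding q_def using l' by simp
  have lq: "length q = Suc k" unfolding q_def by (simp add: ext_len)
  show ?thesis
  proof (rule that[of q l' y])
    show "list_all is_delay (butlast q)" using q D[of k] by simp
    show "\<forall>j\<le>length q. ?E j = take j q"
    proof (intro allI impI)
      fix j assume "j \<le> length q"
      then show "?E j = take j q" using ext_take[of j "Suc k" \<sigma> ?s0] lq unfolding q_def by simp
    qed
    show vq: "valid_run G ?s0 q" using q D[of k] ly el' by simp
    show "q \<noteq> []" "\<not> is_delay (last q)" using q by (auto simp: is_delay_def)
    show "last_st ?s0 q = (l', y)" using q ly by simp
    show "(l, l') \<in> Edges G" by (fact el')
    show "x \<le> y" using delays_mono[of "?E k" G l x] D[of k] ly by simp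
    have "last_st ?s0 q \<in> states G" using valid_states[OF wf s0 vq] .
    then show "y \<le> ub G" using q ly by (simp add: states_def)
    show "run_price G ?s0 q = real (rate G l) * (y - x)"
      using q delays_price[of "?E k" l x G] D[of k] ly by simp
    show "\<forall>i<length q. fst (last_st ?s0 (take i q)) = l \<and> has_move G (last_st ?s0 (take i q))"
    proof (intro allI impI)
      fix i assume i: "i < length q"
      then have ti: "take i q = ?E i" using ext_take[of i "Suc k" \<sigma> ?s0] lq unfolding q_def by simp
      have fl: "fst (last_st ?s0 (?E i)) = l" using delays_price[of "?E i" l x G] D[of i] i lq by simp
      then obtain y' where y': "last_st ?s0 (?E i) = (l, y')" by (metis prod.collapse)
      have "avail G (l, y') (Disc l0)" using e by simp
      have "has_move G (last_st ?s0 (?E i))" unfolding has_move_def y' by (rule exI[of _ "Disc l0"]) (simp add: e)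
      then show "fst (last_st ?s0 (take i q)) = l \<and> has_move G (last_st ?s0 (take i q))"
        using ti fl by simp
    qed
  qed
qed

lemma min_lower:
  fixes G :: "'l game" and x m :: real
  assumes wf: "wf_game G" and lmin: "l \<in> LMin G" and s0: "(l, x) \<in> states G"
    and e: "(l, l0) \<in> Edges G" and ng: "l \<notin> Goal G"
    and fin: "\<forall>s\<in>states G. \<bar>OptCost G s\<bar> \<noteq> \<infinity>"
    and bnd: "\<forall>y l'. x \<le> y \<and> y \<le> ub G \<and> (l, l') \<in> Edges G \<longrightarrow>
                m \<le> real (rate G l) * (y - x) + real_of_ereal (OptCost G (l', y))"
  shows "ereal m \<le> OptCost G (l, x)"
proof -
  let ?s0 = "(l, x)"
  let ?SMin = "{\<mu>. is_strategy G (LMin G) \<mu>}" and ?SMax = "{\<chi>. is_strategy G (LMax G) \<chi>}"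
  have ne: "?SMax \<noteq> {}" using dflt_strategy by blast
  show ?thesis unfolding OptCost_def[of G ?s0]
  proof (rule INF_greatest)
    fix \<mu> assume \<mu>: "\<mu> \<in> ?SMin"
    then have str: "is_strategy G (LMin G) \<mu>" by simp
    obtain q l' y where ex: "\<forall>j\<le>length q. ext \<mu> ?s0 [] j = take j q"
      and vq: "valid_run G ?s0 q" and qne: "q \<noteq> []" and qnd: "\<not> is_delay (last q)"
      and lq: "last_st ?s0 q = (l', y)" and el': "(l, l') \<in> Edges G" and y: "x \<le> y" "y \<le> ub G"
      and pr: "run_price G ?s0 q = real (rate G l) * (y - x)"
      and loc: "\<forall>i<length q. fst (last_st ?s0 (take i q)) = l \<and> has_move G (last_st ?s0 (take i q))"
      and bl: "list_all is_delay (butlast q)"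
      by (rule exit_q[OF wf str s0 lmin e])
    let ?s' = "(l', y)"
    let ?c = "real (rate G l) * (y - x)"
    have s'st: "?s' \<in> states G" using valid_states[OF wf s0 vq] lq by simp
    define r' where "r' = real_of_ereal (OptCost G ?s')"
    have oc: "OptCost G ?s' = ereal r'"
      unfolding r'_def using fin s'st ereal_real'[of "OptCost G ?s'"] by simp
    define \<mu>'' where "\<mu>'' = shiftS ?s0 q \<mu> (dflt G)"
    have \<mu>S: "\<mu>'' \<in> ?SMin" unfolding \<mu>''_def
      using shiftS_strategy[OF str dflt_strategy vq s0] by simp
    have "ereal m \<le> ereal ?c + OptCost G ?s'"
      using bnd[rule_format, of y l'] y el' oc r'_def[symmetric] by simp
    also have "\<dots> \<le> ereal ?c + (SUP \<chi>'\<in>?SMax. run_cost G ?s' \<mu>'' \<chi>')"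
      using \<mu>S unfolding OptCost_def by (intro add_left_mono INF_lower)
    also have "\<dots> = (SUP \<chi>'\<in>?SMax. ereal ?c + run_cost G ?s' \<mu>'' \<chi>')"
      using ne by (simp add: SUP_ereal_add_right)
    also have "\<dots> \<le> (SUP \<chi>\<in>?SMax. run_cost G ?s0 \<mu> \<chi>)"
    proof (rule SUP_least)
      fix \<chi>' assume \<chi>': "\<chi>' \<in> ?SMax"
      define \<chi> where "\<chi> = graft ?s0 {q} (\<lambda>_. \<chi>') (pp ?s0 q (dflt G))"
      have \<chi>S: "\<chi> \<in> ?SMax" unfolding \<chi>_def
        using graft_strategy[OF pp_strategy[OF dflt_strategy vq qne qnd], where Q="{q}" and \<tau>="\<lambda>_. \<chi>'"]
          \<chi>' vq qne qnd wf s0 by (auto simp: antichain_def)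
      have oq: "outc G \<mu> \<chi> ?s0 (length q) = q"
      proof -
        have "\<forall>j<length q. has_move G (last_st ?s0 (ext \<mu> ?s0 [] j)) \<and> fst (last_st ?s0 (ext \<mu> ?s0 [] j)) \<in> LMin G"
          using ex loc lmin by simp
        then show ?thesis using outc_solo_min[of "length q" G "(l, x)" \<mu> \<chi>] ex by simp
      qed
      have rc: "run_cost G ?s0 \<mu> \<chi> = ereal (run_price G ?s0 q) + run_cost G (last_st ?s0 q) \<mu>'' \<chi>'"
      proof (rule run_cost_shift[OF oq refl])
        show "\<forall>i<length q. fst (last_st ?s0 (take i q)) \<notin> Goal G" using loc ng by simp
        show "\<forall>h. \<chi>' (last_st ?s0 q) h = \<chi> ?s0 (q @ h)"
          unfolding \<chi>_def using graft_at[of "{q}" q] by (simp add: antichain_def)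
        show "\<forall>h. \<mu>'' (last_st ?s0 q) h = \<mu> ?s0 (q @ h)"
          unfolding \<mu>''_def by (simp add: shiftS_def)
      qed
      have "run_cost G ?s0 \<mu> \<chi> \<le> (SUP \<chi>\<in>?SMax. run_cost G ?s0 \<mu> \<chi>)"
        using \<chi>S by (rule SUP_upper)
      then show "ereal ?c + run_cost G ?s' \<mu>'' \<chi>' \<le> (SUP \<chi>\<in>?SMax. run_cost G ?s0 \<mu> \<chi>)"
        using rc lq pr by simp
    qed
    finally show "ereal m \<le> (SUP \<chi>\<in>?SMax. run_cost G ?s0 \<mu> \<chi>)" .
  qed
qed

lemma antichain_Q:
  "antichain {q. valid_run G s0 q \<and> q \<noteq> [] \<and> \<not> is_delay (last q) \<and> list_all is_delay (butlast q)}"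
  unfolding antichain_def
proof (intro ballI impI)
  fix q1 q2
  assume q1: "q1 \<in> {q. valid_run G s0 q \<and> q \<noteq> [] \<and> \<not> is_delay (last q) \<and> list_all is_delay (butlast q)}"
    and q2: "q2 \<in> {q. valid_run G s0 q \<and> q \<noteq> [] \<and> \<not> is_delay (last q) \<and> list_all is_delay (butlast q)}"
    and t: "take (length q1) q2 = q1"
  show "q1 = q2"
  proof (cases "length q2 \<le> length q1")
    case True
    then show ?thesis using t by simp
  next
    case False
    define i where "i = length q1 - 1"
    have i1: "i < length q1" using q1 unfolding i_def by auto
    have "length q1 \<ge> 1" using q1 by (simp add: Suc_le_eq)
    then have i2: "i < length (butlast q2)" using False unfolding i_def by auto
    have "last q1 = q1 ! i" using q1 unfolding i_def by (simp add: last_conv_nth)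
    also have "\<dots> = q2 ! i" using t i1 by (metis nth_take)
    also have "\<dots> = butlast q2 ! i" using i2 by (simp add: nth_butlast)
    finally have "is_delay (last q1)" using q2 i2 by (simp add: list_all_length)
    then show ?thesis using q1 by simp
  qed
qed

lemma max_upper:
  fixes G :: "'l game" and x M :: real
  assumes wf: "wf_game G" and lmax: "l \<in> LMax G" and s0: "(l, x) \<in> states G"
    and e: "(l, l0) \<in> Edges G" and ng: "l \<notin> Goal G"
    and fin: "\<forall>s\<in>states G. \<bar>OptCost G s\<bar> \<noteq> \<infinity>"
    and bnd: "\<forall>y l'. x \<le> y \<and> y \<le> ub G \<and> (l, l') \<in> Edges G \<longrightarrow>
                real (rate G l) * (y - x) + real_of_ereal (OptCost G (l', y)) \<le> M"
    and eps: "0 < \<epsilon>"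
  shows "OptCost G (l, x) \<le> ereal (M + \<epsilon>)"
proof -
  let ?s0 = "(l, x)"
  let ?SMin = "{\<mu>. is_strategy G (LMin G) \<mu>}" and ?SMax = "{\<chi>. is_strategy G (LMax G) \<chi>}"
  have lnm: "l \<notin> LMin G" using wf lmax unfolding wf_game_def by blast
  define Q where "Q = {q. valid_run G ?s0 q \<and> q \<noteq> [] \<and> \<not> is_delay (last q) \<and> list_all is_delay (butlast q)}"
  define Mc where "Mc = (\<lambda>s. SOME \<mu>. \<mu> \<in> ?SMin \<and>
      (SUP \<chi>\<in>?SMax. run_cost G s \<mu> \<chi>) < ereal (real_of_ereal (OptCost G s) + \<epsilon>))"
  have Mc: "Mc s \<in> ?SMin \<and> (SUP \<chi>\<in>?SMax. run_cost G s (Mc s) \<chi>) < ereal (real_of_ereal (OptCost G s) + \<epsilon>)"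
    if s: "s \<in> states G" for s
  proof -
    have oc: "OptCost G s = ereal (real_of_ereal (OptCost G s))"
      using fin s ereal_real'[of "OptCost G s"] by simp
    have "OptCost G s < ereal (real_of_ereal (OptCost G s) + \<epsilon>)"
      using eps by (subst oc) simp
    then have "\<exists>\<mu>\<in>?SMin. (SUP \<chi>\<in>?SMax. run_cost G s \<mu> \<chi>) < ereal (real_of_ereal (OptCost G s) + \<epsilon>)"
      unfolding OptCost_def[of G s] by (simp add: INF_less_iff)
    then show ?thesis unfolding Mc_def by (rule someI2_bex) blast
  qed
  define \<mu> where "\<mu> = graft ?s0 Q (\<lambda>q. Mc (last_st ?s0 q)) (dflt G)"
  have ac: "antichain Q" unfolding Q_def by (rule antichain_Q)
  have \<mu>S: "\<mu> \<in> ?SMin" unfolding \<mu>_def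
  proof (simp, rule graft_strategy[OF dflt_strategy _ _ ac wf s0])
    show "\<forall>q\<in>Q. is_strategy G (LMin G) (Mc (last_st ?s0 q))"
      using Mc valid_states[OF wf s0] unfolding Q_def by blast
    show "\<forall>q\<in>Q. valid_run G ?s0 q \<and> q \<noteq> [] \<and> \<not> is_delay (last q)" unfolding Q_def by blast
  qed
  have "OptCost G ?s0 \<le> (SUP \<chi>\<in>?SMax. run_cost G ?s0 \<mu> \<chi>)"
    using \<mu>S unfolding OptCost_def by (rule INF_lower)
  also have "\<dots> \<le> ereal (M + \<epsilon>)"
  proof (rule SUP_least)
    fix \<chi> assume \<chi>: "\<chi> \<in> ?SMax"
    then have str: "is_strategy G (LMax G) \<chi>" by simp
    obtain q l' y where ex: "\<forall>j\<le>length q. ext \<chi> ?s0 [] j = take j q"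
      and vq: "valid_run G ?s0 q" and qne: "q \<noteq> []" and qnd: "\<not> is_delay (last q)"
      and lq: "last_st ?s0 q = (l', y)" and el': "(l, l') \<in> Edges G" and y: "x \<le> y" "y \<le> ub G"
      and pr: "run_price G ?s0 q = real (rate G l) * (y - x)"
      and loc: "\<forall>i<length q. fst (last_st ?s0 (take i q)) = l \<and> has_move G (last_st ?s0 (take i q))"
      and bl: "list_all is_delay (butlast q)"
      by (rule exit_q[OF wf str s0 lmax e])
    have qQ: "q \<in> Q" unfolding Q_def using vq qne qnd bl by simp
    let ?s' = "(l', y)"
    let ?c = "real (rate G l) * (y - x)"
    have s'st: "?s' \<in> states G" using valid_states[OF wf s0 vq] lq by simp
    define \<chi>' where "\<chi>' = shiftS ?s0 q \<chi> (dflt G)"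
    have \<chi>S: "\<chi>' \<in> ?SMax" unfolding \<chi>'_def
      using shiftS_strategy[OF str dflt_strategy vq s0] by simp
    have oq: "outc G \<mu> \<chi> ?s0 (length q) = q"
    proof -
      have "\<forall>j<length q. has_move G (last_st ?s0 (ext \<chi> ?s0 [] j)) \<and> fst (last_st ?s0 (ext \<chi> ?s0 [] j)) \<notin> LMin G"
        using ex loc lnm by simp
      then show ?thesis using outc_solo_max[of "length q" G "(l, x)" \<chi> \<mu>] ex by simp
    qed
    have rc: "run_cost G ?s0 \<mu> \<chi> = ereal (run_price G ?s0 q) + run_cost G (last_st ?s0 q) (Mc ?s') \<chi>'"
    proof (rule run_cost_shift[OF oq refl])
      show "\<forall>i<length q. fst (last_st ?s0 (take i q)) \<notin> Goal G" using loc ng by simp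
      show "\<forall>h. Mc ?s' (last_st ?s0 q) h = \<mu> ?s0 (q @ h)"
        unfolding \<mu>_def using graft_at[OF ac qQ] lq by simp
      show "\<forall>h. \<chi>' (last_st ?s0 q) h = \<chi> ?s0 (q @ h)"
        unfolding \<chi>'_def by (simp add: shiftS_def)
    qed
    have "run_cost G ?s' (Mc ?s') \<chi>' \<le> (SUP \<chi>\<in>?SMax. run_cost G ?s' (Mc ?s') \<chi>)"
      using \<chi>S by (rule SUP_upper)
    also have "\<dots> \<le> ereal (real_of_ereal (OptCost G ?s') + \<epsilon>)" using Mc[OF s'st] by (simp add: less_imp_le)
    finally have "ereal ?c + run_cost G ?s' (Mc ?s') \<chi>' \<le> ereal ?c + ereal (real_of_ereal (OptCost G ?s') + \<epsilon>)"
      by (rule add_left_mono)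
    then have "run_cost G ?s0 \<mu> \<chi> \<le> ereal (?c + (real_of_ereal (OptCost G ?s') + \<epsilon>))"
      using rc lq pr by simp
    also have "\<dots> \<le> ereal (M + \<epsilon>)"
      using bnd[rule_format, of y l'] y el' by simp
    finally show "run_cost G ?s0 \<mu> \<chi> \<le> ereal (M + \<epsilon>)" .
  qed
  finally show ?thesis .
qed

theorem lemma4:
  fixes G :: "'l game" and l :: 'l
  assumes wf: "wf_game G"
    and fin: "\<forall>s\<in>states G. \<bar>OptCost G s\<bar> \<noteq> \<infinity>"
    and l_loc: "l \<in> Locs G"
    and not_goal: "l \<notin> Goal G"
    and not_urgent: "\<not> urgent G l"
    and has_edge: "\<exists>l'. (l, l') \<in> Edges G"
    and succ_cf: "\<forall>l'. (l, l') \<in> Edges G \<longrightarrow>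
                    cost_function (lb G) (ub G) (\<lambda>x. real_of_ereal (OptCost G (l', x)))"
  shows "(l \<in> LMin G \<longrightarrow> (\<forall>x\<in>{lb G..ub G}.
            OptCost G (l, x) = ereal (minC (ub G)
               (\<lambda>y. Min {real_of_ereal (OptCost G (l', y)) | l'. (l, l') \<in> Edges G})
               (real (rate G l)) x)))
       \<and> (l \<in> LMax G \<longrightarrow> (\<forall>x\<in>{lb G..ub G}.
            OptCost G (l, x) = ereal (maxC (ub G)
               (\<lambda>y. Max {real_of_ereal (OptCost G (l', y)) | l'. (l, l') \<in> Edges G})
               (real (rate G l)) x)))"
proof -
  obtain l0 where e0: "(l, l0) \<in> Edges G" using has_edge by blast
  define g where "g = (\<lambda>l' y. real_of_ereal (OptCost G (l', y)))"
  define A where "A = {l'. (l, l') \<in> Edges G}"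
  have setq: "{real_of_ereal (OptCost G (l', y)) | l'. (l, l') \<in> Edges G} = (\<lambda>l'. g l' y) ` A" for y
    unfolding g_def A_def by blast
  have finA: "finite A"
  proof -
    have "A \<subseteq> Locs G" using wf unfolding A_def wf_game_def by blast
    then show ?thesis using wf unfolding wf_game_def by (meson finite_subset)
  qed
  have neA: "A \<noteq> {}" using e0 unfolding A_def by blast
  have Aloc: "l' \<in> Locs G" if "l' \<in> A" for l' using wf that unfolding A_def wf_game_def by blast
  have mono: "g l' z \<le> g l' y" if "l' \<in> A" "lb G \<le> y" "y \<le> z" "z \<le> ub G" for l' y z
    using succ_cf that unfolding A_def g_def cost_function_def by blast
  have gOpt: "OptCost G (l', y) = ereal (g l' y)" if "l' \<in> A" "lb G \<le> y" "y \<le> ub G" for l' y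
  proof -
    have "(l', y) \<in> states G" using Aloc[OF that(1)] that unfolding states_def by simp
    then show ?thesis unfolding g_def using fin ereal_real'[of "OptCost G (l', y)"] by simp
  qed
  have s0: "(l, x) \<in> states G" if "x \<in> {lb G..ub G}" for x using l_loc that unfolding states_def by simp
  have r: "\<exists>r. OptCost G (l, x) = ereal r" if "x \<in> {lb G..ub G}" for x
    using fin s0[OF that] by (metis ereal_real')
  show ?thesis
  proof (intro conjI impI ballI)
    fix x assume x: "x \<in> {lb G..ub G}" and lmin: "l \<in> LMin G"
    define F where "F = (\<lambda>y. Min ((\<lambda>l'. g l' y) ` A))"
    define S where "S = (\<lambda>t. real (rate G l) * t + F (x + t)) ` {0..ub G - x}"
    have Fle: "F y \<le> g l' y" if "l' \<in> A" for l' y unfolding F_def using finA that by simp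
    have Fin: "\<exists>l'\<in>A. F y = g l' y" for y unfolding F_def using finA neA
      by (metis (no_types, lifting) Min_in finite_imageI image_iff image_is_empty)
    obtain r where r: "OptCost G (l, x) = ereal r" using r[OF x] by blast
    have Sne: "S \<noteq> {}" using x unfolding S_def by auto
    have up: "r \<le> Inf S"
    proof (rule cInf_greatest[OF Sne])
      fix z assume "z \<in> S"
      then obtain t where t: "0 \<le> t" "t \<le> ub G - x" and z: "z = real (rate G l) * t + F (x + t)"
        unfolding S_def by auto
      obtain l' where l': "l' \<in> A" "F (x + t) = g l' (x + t)" using Fin by blast
      have "ereal r \<le> ereal (real (rate G l) * t) + OptCost G (l', x + t)"
        using min_upper[OF wf lmin s0[OF x] _ not_urgent t(1) _ not_goal r, of l'] l'(1) t unfolding A_def by simp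
      also have "\<dots> = ereal z" using gOpt[of l' "x + t"] l' t x z by simp
      finally show "r \<le> z" by simp
    qed
    have bdd: "bdd_below S"
    proof (rule bdd_belowI)
      fix z assume "z \<in> S"
      then obtain t where t: "0 \<le> t" "t \<le> ub G - x" and z: "z = real (rate G l) * t + F (x + t)"
        unfolding S_def by auto
      obtain l' where l': "l' \<in> A" "F (x + t) = g l' (x + t)" using Fin by blast
      have "F (ub G) \<le> g l' (ub G)" using Fle l' by simp
      also have "\<dots> \<le> g l' (x + t)" using mono[OF l'(1), of "x + t" "ub G"] x t by simp
      moreover have "0 \<le> real (rate G l) * t" using t by simp
      ultimately show "F (ub G) \<le> z" using z l' t by linarith
    qed
    have lo: "ereal (Inf S) \<le> OptCost G (l, x)"
    proof (rule min_lower[OF wf lmin s0[OF x] e0 not_goal fin])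
      show "\<forall>y l'. x \<le> y \<and> y \<le> ub G \<and> (l, l') \<in> Edges G \<longrightarrow>
            Inf S \<le> real (rate G l) * (y - x) + real_of_ereal (OptCost G (l', y))"
      proof (intro allI impI)
        fix y l' assume a: "x \<le> y \<and> y \<le> ub G \<and> (l, l') \<in> Edges G"
        have mem: "real (rate G l) * (y - x) + F (x + (y - x)) \<in> S"
          unfolding S_def by (rule image_eqI[of _ _ "y - x"]) (use a in auto)
        have "Inf S \<le> real (rate G l) * (y - x) + F (x + (y - x))"
          using mem bdd by (rule cInf_lower)
        also have "\<dots> \<le> real (rate G l) * (y - x) + g l' y" using Fle[of l' y] a unfolding A_def by simp
        finally show "Inf S \<le> real (rate G l) * (y - x) + real_of_ereal (OptCost G (l', y))"
          unfolding g_def .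
      qed
    qed
    have "r = Inf S" using up lo r by simp
    then show "OptCost G (l, x) = ereal (minC (ub G)
               (\<lambda>y. Min {real_of_ereal (OptCost G (l', y)) | l'. (l, l') \<in> Edges G})
               (real (rate G l)) x)"
      using r unfolding minC_def setq S_def F_def by simp
  next
    fix x assume x: "x \<in> {lb G..ub G}" and lmax: "l \<in> LMax G"
    define F where "F = (\<lambda>y. Max ((\<lambda>l'. g l' y) ` A))"
    define S where "S = (\<lambda>t. real (rate G l) * t + F (x + t)) ` {0..ub G - x}"
    have Fge: "g l' y \<le> F y" if "l' \<in> A" for l' y unfolding F_def using finA that by simp
    have Fin: "\<exists>l'\<in>A. F y = g l' y" for y unfolding F_def using finA neA
      by (metis (no_types, lifting) Max_in finite_imageI image_iff image_is_empty)
    obtain r where r: "OptCost G (l, x) = ereal r" using r[OF x] by blast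
    have Sne: "S \<noteq> {}" using x unfolding S_def by auto
    have lo: "Sup S \<le> r"
    proof (rule cSup_least[OF Sne])
      fix z assume "z \<in> S"
      then obtain t where t: "0 \<le> t" "t \<le> ub G - x" and z: "z = real (rate G l) * t + F (x + t)"
        unfolding S_def by auto
      obtain l' where l': "l' \<in> A" "F (x + t) = g l' (x + t)" using Fin by blast
      have "ereal z = ereal (real (rate G l) * t) + OptCost G (l', x + t)"
        using gOpt[of l' "x + t"] l' t x z by simp
      also have "\<dots> \<le> ereal r"
        using max_lower[OF wf lmax s0[OF x] _ not_urgent t(1) _ not_goal, of l'] l'(1) t r unfolding A_def by simp
      finally show "z \<le> r" by simp
    qed
    have bdd: "bdd_above S"
    proof (rule bdd_aboveI)
      fix z assume "z \<in> S"
      then obtain t where t: "0 \<le> t" "t \<le> ub G - x" and z: "z = real (rate G l) * t + F (x + t)"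
        unfolding S_def by auto
      obtain l' where l': "l' \<in> A" "F (x + t) = g l' (x + t)" using Fin by blast
      have "g l' (x + t) \<le> g l' x" using mono[OF l'(1), of x "x + t"] x t by simp
      also have "\<dots> \<le> F x" using Fge l' by simp
      finally have "F (x + t) \<le> F x" using l' by simp
      moreover have "real (rate G l) * t \<le> real (rate G l) * (ub G - x)"
        using t by (simp add: mult_left_mono)
      ultimately show "z \<le> real (rate G l) * (ub G - x) + F x" using z by simp
    qed
    have "r \<le> Sup S"
    proof (rule field_le_epsilon)
      fix \<epsilon> :: real assume eps: "0 < \<epsilon>"
      have "OptCost G (l, x) \<le> ereal (Sup S + \<epsilon>)"
      proof (rule max_upper[OF wf lmax s0[OF x] e0 not_goal fin _ eps])
        show "\<forall>y l'. x \<le> y \<and> y \<le> ub G \<and> (l, l') \<in> Edges G \<longrightarrow>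
              real (rate G l) * (y - x) + real_of_ereal (OptCost G (l', y)) \<le> Sup S"
        proof (intro allI impI)
          fix y l' assume a: "x \<le> y \<and> y \<le> ub G \<and> (l, l') \<in> Edges G"
          have A1: "real (rate G l) * (y - x) + real_of_ereal (OptCost G (l', y)) \<le> real (rate G l) * (y - x) + F (x + (y - x))"
            using Fge[of l' y] a unfolding A_def g_def by simp
          have mem: "real (rate G l) * (y - x) + F (x + (y - x)) \<in> S"
            unfolding S_def by (rule image_eqI[of _ _ "y - x"]) (use a in auto)
          have "real (rate G l) * (y - x) + F (x + (y - x)) \<le> Sup S"
            using mem bdd by (rule cSup_upper)
          with A1 show "real (rate G l) * (y - x) + real_of_ereal (OptCost G (l', y)) \<le> Sup S" by linarith
        qed
      qed
      then show "r \<le> Sup S + \<epsilon>" using r by simp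
    qed
    then have "r = Sup S" using lo by simp
    then show "OptCost G (l, x) = ereal (maxC (ub G)
               (\<lambda>y. Max {real_of_ereal (OptCost G (l', y)) | l'. (l, l') \<in> Edges G})
               (real (rate G l)) x)"
      using r unfolding maxC_def setq S_def F_def by simp
  qed
qed

end
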